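(* In the setting below, $\lambda_P(\mathrm{I}_{n-t}(\mathbf{J})) = \Delta^{n-t}\mathcal{O}$ as ideals of $\mathcal{O}$, where $\mathbf{J}$ is the Jacobian matrix of $f_1,\ldots,f_{n-t}$.
   Context: Let $\mathcal{O}$ be a discrete valuation ring with uniformiser $\varpi$. Let $2\le m\le n$, $t=m-1$, $P=\mathcal{O}[X_{m\times n}]$ (polynomial ring in the entries of an $m\times n$ matrix of indeterminates $X$), $X_{[a,b]}$ the submatrix of columns $a$ through $b$, and $f_k=\det X_{[k,k+t]}$ for $1\le k\le n-t$. The Jacobian $\mathbf{J}$ is the $mn\times(n-t)$ matrix over $P$ with rows indexed by the variables $X_{ij}$, columns indexed by $k$, and entries $\partial f_k/\partial X_{ij}$; $\mathrm{I}_{n-t}(\mathbf{J})$ is its ideal of $(n-t)\times(n-t)$ minors. Fix integers $0\le a_1\le\cdots\le a_t$, let $D=\operatorname{diag}(\varpi^{a_1},\ldots,\varpi^{a_t})$, $\Delta=\det D$. Let $\mathbf{a}\in\mathcal{O}^{m\times n}$ have zero last row and top $t$ entries of column $j$ equal to the $r$-th column of $D$, where $1\le r\le t$, $r\equiv j\pmod t$. Let $\lambda_P\colon P\to\mathcal{O}$ be the $\mathcal{O}$-algebra map $X_{ij}\mapsto\mathbf{a}_{ij}$. *)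

theory Defs
  imports "HOL-Library.Poly_Mapping" "HOL-Combinatorics.Permutations"
begin

definition dvr_uniformiser :: "'a::idom \<Rightarrow> bool" where
  "dvr_uniformiser p \<longleftrightarrow> p \<noteq> 0 \<and> \<not> p dvd 1 \<and>
     (\<forall>x. x \<noteq> 0 \<longrightarrow> (\<exists>u k. u dvd 1 \<and> x = u * p ^ k))"

type_synonym ('v, 'a) mpoly = "('v \<Rightarrow>\<^sub>0 nat) \<Rightarrow>\<^sub>0 'a"

definition Var :: "'v \<Rightarrow> ('v, 'a::comm_ring_1) mpoly" where
  "Var v = Poly_Mapping.single (Poly_Mapping.single v 1) 1"

definition pdiff :: "'v \<Rightarrow> ('v, 'a::comm_ring_1) mpoly \<Rightarrow> ('v, 'a) mpoly" where
  "pdiff v p = sum (\<lambda>mn::'v \<Rightarrow>\<^sub>0 nat.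
      Poly_Mapping.single (mn - Poly_Mapping.single v 1) (of_nat (Poly_Mapping.lookup mn v) * Poly_Mapping.lookup p mn)) (Poly_Mapping.keys p)"

definition peval :: "('v \<Rightarrow> 'a::comm_ring_1) \<Rightarrow> ('v, 'a) mpoly \<Rightarrow> 'a" where
  "peval a p = sum (\<lambda>mn::'v \<Rightarrow>\<^sub>0 nat. Poly_Mapping.lookup p mn * (\<Prod>v\<in>Poly_Mapping.keys mn. a v ^ Poly_Mapping.lookup mn v)) (Poly_Mapping.keys p)"

definition detq :: "nat \<Rightarrow> (nat \<Rightarrow> nat \<Rightarrow> 'a::comm_ring_1) \<Rightarrow> 'a" where
  "detq q M = (\<Sum>\<sigma> | \<sigma> permutes {0..<q}. of_int (sign \<sigma>) * (\<Prod>i<q. M i (\<sigma> i)))"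

definition ideal_gen :: "'a::comm_ring_1 set \<Rightarrow> 'a set" where
  "ideal_gen S = {x. \<exists>F c. finite F \<and> F \<subseteq> S \<and> x = (\<Sum>g\<in>F. c g * g)}"

text \<open>Setting: X is the m x n matrix of variables X_(i,j), 1 <= i <= m, 1 <= j <= n;
t = m - 1; f_k = det X_[k,k+t], 1 <= k <= n - t.\<close>
definition fk :: "nat \<Rightarrow> nat \<Rightarrow> (nat \<times> nat, 'a::comm_ring_1) mpoly" where
  "fk m k = detq m (\<lambda>r c. Var (r + 1, k + c))"

definition jac :: "nat \<Rightarrow> nat \<times> nat \<Rightarrow> nat \<Rightarrow> (nat \<times> nat, 'a::comm_ring_1) mpoly" where
  "jac m v k = pdiff v (fk m k)"

text \<open>The (n-t) x (n-t) minors of the mn x (n-t) Jacobian: choose n-t distinct rows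
(variables) in some order (up to sign this gives all maximal minors).\<close>
definition jac_minors :: "nat \<Rightarrow> nat \<Rightarrow> (nat \<times> nat, 'a::comm_ring_1) mpoly set" where
  "jac_minors m n = (let t = m - 1 in
     {detq (n - t) (\<lambda>r c. jac m (\<rho> r) (c + 1)) | \<rho>.
        inj_on \<rho> {0..<n - t} \<and> \<rho> ` {0..<n - t} \<subseteq> {1..m} \<times> {1..n}})"

text \<open>The point a: last row zero, top t entries of column j equal the r-th column of
D = diag(p^e_1,...,p^e_t), where 1 <= r <= t, r = j mod t.\<close>
definition apt :: "nat \<Rightarrow> 'a::comm_ring_1 \<Rightarrow> (nat \<Rightarrow> nat) \<Rightarrow> nat \<times> nat \<Rightarrow> 'a" where
  "apt m p e v = (let t = m - 1; i = fst v; j = snd v; r = (j + t - 1) mod t + 1 in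
     if 1 \<le> i \<and> i \<le> t \<and> i = r then p ^ e r else 0)"

end

theory Submission
  imports Defs
begin


definition mon :: "('v \<Rightarrow> 'a::comm_ring_1) \<Rightarrow> ('v \<Rightarrow>\<^sub>0 nat) \<Rightarrow> 'a" where
  "mon a mn = (\<Prod>v\<in>Poly_Mapping.keys mn. a v ^ Poly_Mapping.lookup mn v)"

lemma mon_superset:
  assumes "finite K" "Poly_Mapping.keys mn \<subseteq> K"
  shows "mon a mn = (\<Prod>v\<in>K. a v ^ Poly_Mapping.lookup mn v)"
  unfolding mon_def
  by (rule prod.mono_neutral_left[OF assms]) (auto simp: in_keys_iff)

lemma mon_add: "mon a (x + y) = mon a x * mon a y"
proof -
  let ?K = "Poly_Mapping.keys x \<union> Poly_Mapping.keys y"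
  have "mon a (x + y) = (\<Prod>v\<in>?K. a v ^ Poly_Mapping.lookup (x + y) v)"
    by (rule mon_superset) (auto simp: keys_add)
  also have "\<dots> = (\<Prod>v\<in>?K. a v ^ Poly_Mapping.lookup x v) * (\<Prod>v\<in>?K. a v ^ Poly_Mapping.lookup y v)"
    by (simp add: lookup_add power_add prod.distrib)
  also have "\<dots> = mon a x * mon a y"
    by (simp add: mon_superset[symmetric])
  finally show ?thesis .
qed

lemma mon_zero: "mon a 0 = 1" by (simp add: mon_def)

lemma mon_single: "mon a (Poly_Mapping.single v 1) = a v" unfolding mon_def by simp

lemma peval_superset:
  assumes "finite K" "Poly_Mapping.keys p \<subseteq> K"
  shows "peval a p = (\<Sum>mn\<in>K. Poly_Mapping.lookup p mn * mon a mn)"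
  unfolding peval_def mon_def[symmetric]
  by (rule sum.mono_neutral_left[OF assms]) (auto simp: in_keys_iff)

lemma peval_add: "peval a (p + q) = peval a p + peval a q"
proof -
  let ?K = "Poly_Mapping.keys p \<union> Poly_Mapping.keys q"
  have "peval a (p + q) = (\<Sum>mn\<in>?K. Poly_Mapping.lookup (p + q) mn * mon a mn)"
    by (rule peval_superset) (auto simp: keys_add)
  also have "\<dots> = (\<Sum>mn\<in>?K. Poly_Mapping.lookup p mn * mon a mn) + (\<Sum>mn\<in>?K. Poly_Mapping.lookup q mn * mon a mn)"
    by (simp add: lookup_add distrib_right sum.distrib)
  also have "\<dots> = peval a p + peval a q"
    by (simp add: peval_superset[symmetric])
  finally show ?thesis .
qed

lemma peval_zero: "peval a 0 = 0" by (simp add: peval_def)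

lemma peval_single: "peval a (Poly_Mapping.single x c) = c * mon a x"
  by (subst peval_superset[where K="{x}"]) (auto simp: lookup_single)

lemma peval_sum: "peval a (sum f I) = (\<Sum>i\<in>I. peval a (f i))"
  by (induction I rule: infinite_finite_induct) (auto simp: peval_zero peval_add)

lemma decomp: "p = (\<Sum>x\<in>Poly_Mapping.keys p. Poly_Mapping.single x (Poly_Mapping.lookup p x))"
  by (rule poly_mapping_eqI) (simp add: lookup_sum lookup_single when_def in_keys_iff sum.delta' split: if_splits)

lemma peval_mult: "peval a (p * q) = peval a p * peval a q"
proof -
  have "p * q = (\<Sum>x\<in>Poly_Mapping.keys p. \<Sum>y\<in>Poly_Mapping.keys q.
      Poly_Mapping.single x (Poly_Mapping.lookup p x) * Poly_Mapping.single y (Poly_Mapping.lookup q y))"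
    by (subst decomp[of p], subst decomp[of q]) (simp add: sum_product)
  then have "peval a (p * q) = (\<Sum>x\<in>Poly_Mapping.keys p. \<Sum>y\<in>Poly_Mapping.keys q.
      (Poly_Mapping.lookup p x * mon a x) * (Poly_Mapping.lookup q y * mon a y))"
    by (simp add: peval_sum mult_single peval_single mon_add algebra_simps)
  also have "\<dots> = peval a p * peval a q"
    by (simp add: peval_def mon_def sum_product)
  finally show ?thesis .
qed

lemma peval_uminus: "peval a (- p) = - peval a p"
  using peval_add[of a "-p" p] by (simp add: peval_zero eq_neg_iff_add_eq_0)

lemma peval_const: "peval a (Poly_Mapping.single 0 c) = c"
  by (simp add: peval_single mon_zero)

lemma peval_one: "peval a 1 = 1"
  using peval_const[of a 1] by simp

lemma peval_of_int: "peval a (of_int z) = of_int z"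
  using peval_const[of a "of_int z"] by simp

lemma peval_prod: "peval a (prod f I) = (\<Prod>i\<in>I. peval a (f i))"
  by (induction I rule: infinite_finite_induct) (auto simp: peval_one peval_mult)

lemma peval_Var: "peval a (Var v) = a v"
  unfolding Var_def peval_single mon_single by simp

lemma peval_detq: "peval a (detq q M) = detq q (\<lambda>i j. peval a (M i j))"
  by (simp add: detq_def peval_sum peval_mult peval_of_int peval_prod)


lemma pdiff_superset:
  assumes "finite K" "Poly_Mapping.keys p \<subseteq> K"
  shows "pdiff v p = (\<Sum>mn\<in>K. Poly_Mapping.single (mn - Poly_Mapping.single v 1) (of_nat (Poly_Mapping.lookup mn v) * Poly_Mapping.lookup p mn))"
  unfolding pdiff_def
  by (rule sum.mono_neutral_left[OF assms]) (auto simp: in_keys_iff)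

lemma pdiff_add: "pdiff v (p + q) = pdiff v p + pdiff v q"
proof -
  let ?K = "Poly_Mapping.keys p \<union> Poly_Mapping.keys q"
  show ?thesis
    apply (subst (1 2 3) pdiff_superset[where K="?K"])
    apply (auto simp: keys_add lookup_add distrib_left single_add sum.distrib)
    done
qed

lemma pdiff_zero: "pdiff v 0 = 0" by (simp add: pdiff_def)

lemma pdiff_single: "pdiff v (Poly_Mapping.single x c) =
   Poly_Mapping.single (x - Poly_Mapping.single v 1) (of_nat (Poly_Mapping.lookup x v) * c)"
  by (subst pdiff_superset[where K="{x}"]) (auto simp: lookup_single)

lemma pdiff_sum: "pdiff v (sum f I) = (\<Sum>i\<in>I. pdiff v (f i))"
  by (induction I rule: infinite_finite_induct) (auto simp: pdiff_zero pdiff_add)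

lemma pdiff_mono_mult:
  "pdiff v (Poly_Mapping.single x c * Poly_Mapping.single y d) =
   pdiff v (Poly_Mapping.single x c) * Poly_Mapping.single y d + Poly_Mapping.single x c * pdiff v (Poly_Mapping.single y d)"
proof -
  let ?d = "Poly_Mapping.single v (1::nat)"
  have 1: "Poly_Mapping.single (x + y - ?d) (of_nat (Poly_Mapping.lookup x v) * c * d)
     = Poly_Mapping.single (x - ?d + y) (of_nat (Poly_Mapping.lookup x v) * c * d)"
  proof (cases "Poly_Mapping.lookup x v = 0")
    case False
    then have "x + y - ?d = x - ?d + y"
      by (intro poly_mapping_eqI) (auto simp: lookup_add lookup_minus lookup_single when_def)
    then show ?thesis by simp
  qed simp
  have 2: "Poly_Mapping.single (x + y - ?d) (of_nat (Poly_Mapping.lookup y v) * c * d)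
     = Poly_Mapping.single (x + (y - ?d)) (of_nat (Poly_Mapping.lookup y v) * c * d)"
  proof (cases "Poly_Mapping.lookup y v = 0")
    case False
    then have "x + y - ?d = x + (y - ?d)"
      by (intro poly_mapping_eqI) (auto simp: lookup_add lookup_minus lookup_single when_def)
    then show ?thesis by simp
  qed simp
  have "pdiff v (Poly_Mapping.single x c * Poly_Mapping.single y d) =
     Poly_Mapping.single (x + y - ?d) (of_nat (Poly_Mapping.lookup x v) * c * d)
   + Poly_Mapping.single (x + y - ?d) (of_nat (Poly_Mapping.lookup y v) * c * d)"
    unfolding mult_single pdiff_single lookup_add single_add[symmetric]
    by (simp add: algebra_simps)
  also have "\<dots> = Poly_Mapping.single (x - ?d + y) (of_nat (Poly_Mapping.lookup x v) * c * d)
     + Poly_Mapping.single (x + (y - ?d)) (of_nat (Poly_Mapping.lookup y v) * c * d)"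
    unfolding 1 2 ..
  also have "\<dots> = pdiff v (Poly_Mapping.single x c) * Poly_Mapping.single y d + Poly_Mapping.single x c * pdiff v (Poly_Mapping.single y d)"
    unfolding mult_single pdiff_single by (simp add: algebra_simps)
  finally show ?thesis .
qed

lemma pdiff_mult: "pdiff v (p * q) = pdiff v p * q + p * pdiff v q"
proof -
  have "p * q = (\<Sum>x\<in>Poly_Mapping.keys p. \<Sum>y\<in>Poly_Mapping.keys q.
      Poly_Mapping.single x (Poly_Mapping.lookup p x) * Poly_Mapping.single y (Poly_Mapping.lookup q y))"
    by (subst decomp[of p], subst decomp[of q]) (simp add: sum_product)
  then have "pdiff v (p * q) = (\<Sum>x\<in>Poly_Mapping.keys p. \<Sum>y\<in>Poly_Mapping.keys q.
      pdiff v (Poly_Mapping.single x (Poly_Mapping.lookup p x)) * Poly_Mapping.single y (Poly_Mapping.lookup q y)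
    + Poly_Mapping.single x (Poly_Mapping.lookup p x) * pdiff v (Poly_Mapping.single y (Poly_Mapping.lookup q y)))"
    by (simp add: pdiff_sum pdiff_mono_mult)
  also have "\<dots> = pdiff v (\<Sum>x\<in>Poly_Mapping.keys p. Poly_Mapping.single x (Poly_Mapping.lookup p x)) * (\<Sum>y\<in>Poly_Mapping.keys q. Poly_Mapping.single y (Poly_Mapping.lookup q y))
     + (\<Sum>x\<in>Poly_Mapping.keys p. Poly_Mapping.single x (Poly_Mapping.lookup p x)) * pdiff v (\<Sum>y\<in>Poly_Mapping.keys q. Poly_Mapping.single y (Poly_Mapping.lookup q y))"
    by (simp add: pdiff_sum sum_product sum.distrib)
  also have "\<dots> = pdiff v p * q + p * pdiff v q"
    by (simp only: decomp[symmetric])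
  finally show ?thesis .
qed

lemma pdiff_const: "pdiff v (Poly_Mapping.single 0 c) = 0"
  by (simp add: pdiff_single)

lemma pdiff_of_int: "pdiff v (of_int z) = 0"
  using pdiff_const[of v "of_int z"] by simp

lemma pdiff_Var: "pdiff v (Var w) = (if w = v then 1 else 0)"
proof (cases "w = v")
  case True
  then show ?thesis unfolding Var_def pdiff_single by simp
next
  case False
  then have "Poly_Mapping.lookup (Poly_Mapping.single w (1::nat)) v = 0"
    by (simp add: lookup_single_not_eq)
  then show ?thesis using False unfolding Var_def pdiff_single by simp
qed

lemma pdiff_prod:
  "finite I \<Longrightarrow> pdiff v (prod f I) = (\<Sum>i\<in>I. pdiff v (f i) * prod f (I - {i}))"
proof (induction I rule: finite_induct)
  case empty
  show ?case using pdiff_const[of v 1] by simp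
next
  case (insert x F)
  have "pdiff v (prod f (insert x F)) = pdiff v (f x) * prod f F + f x * pdiff v (prod f F)"
    using insert by (simp add: pdiff_mult)
  also have "\<dots> = pdiff v (f x) * prod f F + (\<Sum>i\<in>F. pdiff v (f i) * (f x * prod f (F - {i})))"
    using insert by (simp add: sum_distrib_left algebra_simps)
  also have "\<dots> = (\<Sum>i\<in>insert x F. pdiff v (f i) * prod f (insert x F - {i}))"
  proof -
    have "prod f (insert x F - {i}) = f x * prod f (F - {i})" if iF: "i \<in> F" for i
    proof -
      have "insert x F - {i} = insert x (F - {i})" using iF insert by auto
      then show ?thesis using insert by simp
    qed
    moreover have "insert x F - {x} = F" using insert by auto
    ultimately show ?thesis using insert by simp
  qed
  finally show ?case .
qed




lemma peval_if01: "peval a (if P then 1 else 0) = (if P then 1 else 0)"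
  by (simp add: peval_one peval_zero)

lemma jac_eval:
  "peval a (jac m v k) = (\<Sum>\<sigma> | \<sigma> permutes {0..<m}. of_int (sign \<sigma>) *
     (\<Sum>i<m. (if (i+1, k + \<sigma> i) = v then 1 else 0) * (\<Prod>j\<in>{..<m}-{i}. a (j+1, k + \<sigma> j))))"
  unfolding jac_def fk_def detq_def
  by (simp add: pdiff_sum pdiff_mult pdiff_of_int pdiff_prod pdiff_Var peval_sum peval_mult
      peval_of_int peval_prod peval_Var peval_if01)

lemma apt_top: "apt (Suc t) p e (Suc t, j) = 0"
  by (simp add: apt_def Let_def)

lemma apt_low: "l < t \<Longrightarrow> apt (Suc t) p e (Suc l, c) = (if (c + t - 1) mod t = l then p ^ e (Suc l) else 0)"
  by (auto simp: apt_def Let_def)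

lemma dvd_entry:
  assumes "1 \<le> t"
  shows "(\<Prod>l<t. p ^ e (Suc l)) dvd peval (apt (Suc t) p e) (jac (Suc t) v k)"
  unfolding jac_eval
proof (intro dvd_sum dvd_mult)
  fix \<sigma> i assume i: "i \<in> {..<Suc t}"
  show "(\<Prod>l<t. p ^ e (Suc l)) dvd (\<Prod>j\<in>{..<Suc t}-{i}. apt (Suc t) p e (j+1, k + \<sigma> j))"
  proof (cases "i = t")
    case True
    then have "{..<Suc t}-{i} = {..<t}" by auto
    then show ?thesis
      by (simp add: apt_low prod_dvd_prod)
  next
    case False
    then have "t \<in> {..<Suc t}-{i}" by auto
    then have "(\<Prod>j\<in>{..<Suc t}-{i}. apt (Suc t) p e (j+1, k + \<sigma> j)) = 0"
      by (intro prod_zero) (auto intro!: bexI[of _ t] simp: apt_top)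
    then show ?thesis by simp
  qed
qed

lemma dvd_detq:
  assumes "\<And>i j. i < q \<Longrightarrow> j < q \<Longrightarrow> d dvd M i j"
  shows "d ^ q dvd detq q M"
  unfolding detq_def
proof (intro dvd_sum dvd_mult)
  fix \<sigma> assume "\<sigma> \<in> {\<sigma>. \<sigma> permutes {0..<q}}"
  then have "\<And>i. i < q \<Longrightarrow> \<sigma> i < q" using permutes_in_image by fastforce
  then have "(\<Prod>i<q. d) dvd (\<Prod>i<q. M i (\<sigma> i))"
    by (intro prod_dvd_prod assms) auto
  then show "d ^ q dvd (\<Prod>i<q. M i (\<sigma> i))" by simp
qed

lemma detq_lower:
  assumes "\<And>i j. i < q \<Longrightarrow> j < q \<Longrightarrow> i < j \<Longrightarrow> M i j = 0"
  shows "detq q M = (\<Prod>i<q. M i i)"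
proof -
  let ?S = "{\<sigma>. \<sigma> permutes {0..<q}}"
  let ?g = "\<lambda>\<sigma>. of_int (sign \<sigma>) * (\<Prod>i<q. M i (\<sigma> i))"
  have fin: "finite ?S" by (simp add: finite_permutations)
  have idS: "id \<in> ?S" by simp
  have "detq q M = ?g id + sum ?g (?S - {id})"
    unfolding detq_def by (rule sum.remove[OF fin idS])
  also have "sum ?g (?S - {id}) = 0"
  proof (intro sum.neutral ballI)
    fix \<sigma> assume s: "\<sigma> \<in> ?S - {id}"
    then have "\<not> (\<forall>i\<in>{0..<q}. \<sigma> i \<le> i)" using permutes_natset_le by blast
    then obtain i where i: "i < q" "\<sigma> i > i" by auto
    have "\<sigma> i < q" using s i permutes_in_image by fastforce
    then have "M i (\<sigma> i) = 0" using assms i by auto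
    then have "(\<Prod>i<q. M i (\<sigma> i)) = 0" using i by (intro prod_zero) auto
    then show "?g \<sigma> = 0" by simp
  qed
  finally show ?thesis by simp
qed




lemma modeq:
  fixes y y' t K :: nat
  assumes "1 \<le> y" "y \<le> t" "1 \<le> y'" "y' \<le> t" "(K + y) mod t = (K + y') mod t"
  shows "y = y'"
proof -
  have *: "y = y'" if "y \<le> y'" "1 \<le> y" "y' \<le> t" "(K + y) mod t = (K + y') mod t" for y y'
  proof -
    have "t dvd (K + y') - (K + y)" using that mod_eq_dvd_iff_nat[of "K+y" "K+y'" t] by simp
    then have dv: "t dvd y' - y" by simp
    have lt: "y' - y < t" using that by auto
    have "y' - y = 0"
    proof (rule ccontr)
      assume "y' - y \<noteq> 0"
      then have "t \<le> y' - y" using dv by (simp add: dvd_imp_le)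
      then show False using lt by simp
    qed
    then show ?thesis using that by simp
  qed
  show ?thesis
    using assms *[of y y'] *[of y' y] by (cases "y \<le> y'") auto
qed

definition s0 :: "nat \<Rightarrow> nat \<Rightarrow> nat \<Rightarrow> nat" where
  "s0 t k x = (if x < t then (x + t - k mod t) mod t + 1 else if x = t then 0 else x)"

lemma s0_cond:
  assumes "x < t" shows "(k + s0 t k x + t - 1) mod t = x"
proof -
  have t: "0 < t" using assms by simp
  let ?d = "(x + t - k mod t) mod t"
  have "k + s0 t k x + t - 1 = k + ?d + t" using assms by (simp add: s0_def)
  then have "(k + s0 t k x + t - 1) mod t = (k + ?d) mod t" by simp
  also have "\<dots> = (k mod t + (x + t - k mod t)) mod t"
    by (metis mod_add_left_eq mod_add_right_eq)
  also have "k mod t + (x + t - k mod t) = x + t"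
    using t mod_less_divisor[OF t, of k] by linarith
  finally show ?thesis using assms by simp
qed

lemma s0_range: "x < t \<Longrightarrow> 1 \<le> s0 t k x \<and> s0 t k x \<le> t"
  by (simp add: s0_def Suc_leI)

lemma s0_perm:
  assumes "0 < t" shows "s0 t k permutes {0..<Suc t}"
proof (rule bij_imp_permutes)
  have img: "s0 t k ` {0..<Suc t} \<subseteq> {0..<Suc t}"
    using s0_range by (force simp: s0_def)
  have inj: "inj_on (s0 t k) {0..<Suc t}"
  proof (rule inj_onI)
    fix x y assume x: "x \<in> {0..<Suc t}" and y: "y \<in> {0..<Suc t}" and eq: "s0 t k x = s0 t k y"
    show "x = y"
    proof (cases "x < t")
      case True
      show ?thesis
      proof (cases "y < t")
        case True
        then show ?thesis using s0_cond[of x t k] s0_cond[of y t k] \<open>x < t\<close> eq by simp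
      next
        case False
        then have "y = t" using y by auto
        then show ?thesis using eq s0_range[of x t k] \<open>x < t\<close> by (simp add: s0_def)
      qed
    next
      case False
      then have "x = t" using x by auto
      show ?thesis
      proof (cases "y < t")
        case True
        then show ?thesis using eq s0_range[of y t k] \<open>x = t\<close> by (simp add: s0_def)
      next
        case False
        then show ?thesis using y \<open>x = t\<close> by auto
      qed
    qed
  qed
  show "bij_betw (s0 t k) {0..<Suc t} {0..<Suc t}"
    unfolding bij_betw_def using inj img endo_inj_surj[OF _ img inj] by auto
  show "\<And>x. x \<notin> {0..<Suc t} \<Longrightarrow> s0 t k x = x" by (simp add: s0_def)
qed

lemma s0_unique:
  assumes "0 < t" "\<sigma> permutes {0..<Suc t}" "\<sigma> t = 0" "\<forall>j<t. (k + \<sigma> j + t - 1) mod t = j"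
  shows "\<sigma> = s0 t k"
proof
  fix x
  show "\<sigma> x = s0 t k x"
  proof (cases "x < t")
    case True
    have "\<sigma> x < Suc t" using assms(2) True permutes_in_image by fastforce
    moreover have "\<sigma> x \<noteq> 0"
    proof
      assume "\<sigma> x = 0"
      then have "\<sigma> x = \<sigma> t" using assms(3) by simp
      then have "x = t" using permutes_inj[OF assms(2)] by (simp add: inj_eq)
      then show False using True by simp
    qed
    ultimately have r: "1 \<le> \<sigma> x" "\<sigma> x \<le> t" by auto
    have h1: "(k + \<sigma> x + t - 1) mod t = x" using assms(4) True by simp
    have h2: "(k + s0 t k x + t - 1) mod t = x" using s0_cond[OF True] by simp
    have e1: "k + t - 1 + \<sigma> x = k + \<sigma> x + t - 1" using assms(1) by simp
    have e2: "k + t - 1 + s0 t k x = k + s0 t k x + t - 1" using assms(1) by simp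
    have "(k + t - 1 + \<sigma> x) mod t = (k + t - 1 + s0 t k x) mod t"
      unfolding e1 e2 h1 h2 ..
    then show ?thesis using modeq[OF r s0_range[OF True, THEN conjunct1] s0_range[OF True, THEN conjunct2]]
      by simp
  next
    case False
    then show ?thesis
    proof (cases "x = t")
      case True then show ?thesis using assms(3) by (simp add: s0_def)
    next
      case False
      then have "x \<notin> {0..<Suc t}" using \<open>\<not> x < t\<close> by auto
      then show ?thesis using permutes_not_in[OF assms(2)] False \<open>\<not> x < t\<close> by (simp add: s0_def)
    qed
  qed
qed

lemma diag:
  assumes "0 < t"
  shows "\<exists>\<sigma>::nat\<Rightarrow>nat. peval (apt (Suc t) p e) (jac (Suc t) (Suc t, k) k) = of_int (sign \<sigma>) * (\<Prod>l<t. p ^ e (Suc l))"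
proof -
  let ?a = "apt (Suc t) p e"
  let ?S = "{\<sigma>. \<sigma> permutes {0..<Suc t}}"
  let ?G = "\<lambda>\<sigma>. of_int (sign \<sigma>) * (if \<sigma> t = 0 then \<Prod>j<t. ?a (Suc j, k + \<sigma> j) else 0)"
  have inner: "(\<Sum>i<Suc t. (if (i+1, k + \<sigma> i) = (Suc t, k) then 1 else 0) * (\<Prod>j\<in>{..<Suc t}-{i}. ?a (j+1, k + \<sigma> j)))
     = (if \<sigma> t = 0 then \<Prod>j<t. ?a (Suc j, k + \<sigma> j) else 0)" for \<sigma>
  proof -
    have "(\<Sum>i<Suc t. (if (i+1, k + \<sigma> i) = (Suc t, k) then 1 else 0) * (\<Prod>j\<in>{..<Suc t}-{i}. ?a (j+1, k + \<sigma> j)))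
      = (\<Sum>i<Suc t. if i = t then (if \<sigma> t = 0 then (\<Prod>j\<in>{..<Suc t}-{t}. ?a (j+1, k + \<sigma> j)) else 0) else 0)"
      by (rule sum.cong) auto
    also have "{..<Suc t}-{t} = {..<t}" by auto
    finally show ?thesis by simp
  qed
  have E: "peval ?a (jac (Suc t) (Suc t, k) k) = sum ?G ?S"
    unfolding jac_eval inner by simp
  have fin: "finite ?S" by (simp add: finite_permutations)
  have s0S: "s0 t k \<in> ?S" using s0_perm[OF assms] by simp
  have "sum ?G ?S = ?G (s0 t k) + sum ?G (?S - {s0 t k})"
    by (rule sum.remove[OF fin s0S])
  also have "sum ?G (?S - {s0 t k}) = 0"
  proof (intro sum.neutral ballI)
    fix \<sigma> assume s: "\<sigma> \<in> ?S - {s0 t k}"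
    show "?G \<sigma> = 0"
    proof (rule ccontr)
      assume nz: "?G \<sigma> \<noteq> 0"
      then have st: "\<sigma> t = 0" by (auto split: if_splits)
      with nz have pnz: "(\<Prod>j<t. ?a (Suc j, k + \<sigma> j)) \<noteq> 0" by auto
      have "\<forall>j<t. ?a (Suc j, k + \<sigma> j) \<noteq> 0"
      proof (intro allI impI notI)
        fix j assume j: "j < t" and z: "?a (Suc j, k + \<sigma> j) = 0"
        have "(\<Prod>j<t. ?a (Suc j, k + \<sigma> j)) = 0"
          by (rule prod_zero) (use j z in auto)
        with pnz show False by simp
      qed
      then have "\<forall>j<t. (k + \<sigma> j + t - 1) mod t = j"
        by (auto simp: apt_low split: if_splits)
      then have "\<sigma> = s0 t k" using s0_unique[OF assms] s st by auto
      then show False using s by auto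
    qed
  qed
  also have "?G (s0 t k) = of_int (sign (s0 t k)) * (\<Prod>l<t. p ^ e (Suc l))"
  proof -
    have "s0 t k t = 0" by (simp add: s0_def)
    moreover have "(\<Prod>j<t. ?a (Suc j, k + s0 t k j)) = (\<Prod>l<t. p ^ e (Suc l))"
    proof (rule prod.cong)
      fix j assume "j \<in> {..<t}"
      then show "?a (Suc j, k + s0 t k j) = p ^ e (Suc j)"
        using s0_cond[of j t k] by (simp add: apt_low)
    qed simp
    ultimately show ?thesis by simp
  qed
  finally have X: "sum ?G ?S = of_int (sign (s0 t k)) * (\<Prod>l<t. p ^ e (Suc l))" by simp
  show ?thesis by (rule exI[of _ "s0 t k"], rule trans[OF E X])
qed




theorem lemma5p6:
  fixes p :: "'a::idom" and m n :: nat and e :: "nat \<Rightarrow> nat"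
  assumes "dvr_uniformiser p"
    and "2 \<le> m" and "m \<le> n"
    and "\<And>i j. 1 \<le> i \<Longrightarrow> i \<le> j \<Longrightarrow> j \<le> m - 1 \<Longrightarrow> e i \<le> e j"
  shows "peval (apt m p e) ` ideal_gen (jac_minors m n)
         = {(\<Prod>r=1..m - 1. p ^ e r) ^ (n - (m - 1)) * x | x. True}"
proof -
  obtain t where m: "m = Suc t" and t: "0 < t" using assms(2)
    by (metis Suc_le_D Suc_le_lessD less_2_cases_iff nat_less_le not_less_eq_eq)
  define q where "q = n - t"
  have qn: "q \<le> n" by (simp add: q_def)
  define D where "D = (\<Prod>l<t. p ^ e (Suc l))"
  have Dd: "(\<Prod>r=1..m - 1. p ^ e r) = D"
    unfolding D_def m by (simp add: prod.atLeast1_atMost_eq)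
  let ?a = "apt m p e"
  have jm: "jac_minors m n = {detq q (\<lambda>r c. jac m (\<rho> r) (c+1)) | \<rho>.
        inj_on \<rho> {0..<q} \<and> \<rho> ` {0..<q} \<subseteq> {1..m} \<times> {1..n}}"
    by (simp add: jac_minors_def q_def m Let_def)
  have mindvd: "D ^ q dvd peval ?a g" if gin: "g \<in> jac_minors m n" for g
  proof -
    obtain \<rho> where g: "g = detq q (\<lambda>r c. jac m (\<rho> r) (c+1))"
      using gin unfolding jm by blast
    show ?thesis
      unfolding g peval_detq D_def m
      by (rule dvd_detq, rule dvd_entry) (use t in auto)
  qed
  have "peval ?a ` ideal_gen (jac_minors m n) = {D ^ q * x | x. True}"
  proof (intro set_eqI iffI)
    fix y assume "y \<in> peval ?a ` ideal_gen (jac_minors m n)"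
    then obtain F c where F: "F \<subseteq> jac_minors m n" and y: "y = peval ?a (\<Sum>g\<in>F. c g * g)"
      unfolding ideal_gen_def by auto
    have "D ^ q dvd y"
      unfolding y peval_sum peval_mult
      by (intro dvd_sum dvd_mult mindvd) (use F in auto)
    then show "y \<in> {D ^ q * x | x. True}" by (auto elim!: dvdE)
  next
    fix y assume "y \<in> {D ^ q * x | x. True}"
    then obtain x where y: "y = D ^ q * x" by auto
    define g0 :: "(nat \<times> nat, 'a) mpoly" where "g0 = detq q (\<lambda>r c. jac m (m, r+1) (c+1))"
    have g0: "g0 \<in> jac_minors m n"
      unfolding jm g0_def using qn m
      by (intro CollectI exI[of _ "\<lambda>r. (m, r+1)"]) (auto simp: inj_on_def)
    have ex: "\<And>i. \<exists>\<sigma>::nat\<Rightarrow>nat. peval ?a (jac m (m, i+1) (i+1)) = of_int (sign \<sigma>) * D"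
      unfolding m D_def using diag[OF t] by auto
    define S where "S i = (SOME \<sigma>::nat\<Rightarrow>nat. peval ?a (jac m (m, i+1) (i+1)) = of_int (sign \<sigma>) * D)" for i
    have S: "\<And>i. peval ?a (jac m (m, i+1) (i+1)) = of_int (sign (S i)) * D"
      unfolding S_def by (rule someI_ex[OF ex])
    define u where "u = (\<Prod>i<q. (of_int (sign (S i)) :: 'a))"
    have uu: "u * u = 1"
      unfolding u_def prod.distrib[symmetric] of_int_mult[symmetric] by simp
    have "peval ?a g0 = (\<Prod>i<q. peval ?a (jac m (m, i+1) (i+1)))"
      unfolding g0_def peval_detq
    proof (rule detq_lower)
      fix i j assume "i < q" "j < q" "i < j"
      then show "peval ?a (jac m (m, i+1) (j+1)) = 0"
        by (auto simp: jac_eval intro!: sum.neutral)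
    qed
    also have "\<dots> = u * D ^ q"
      unfolding S u_def by (simp add: prod.distrib)
    finally have pg0: "peval ?a g0 = u * D ^ q" .
    have "y = peval ?a (Poly_Mapping.single 0 (x * u) * g0)"
      unfolding peval_mult peval_const pg0 y
      by (metis (no_types, lifting) mult.commute mult.left_commute mult_1_right uu)
    moreover have "Poly_Mapping.single 0 (x * u) * g0 \<in> ideal_gen (jac_minors m n)"
      unfolding ideal_gen_def
      by (intro CollectI exI[of _ "{g0}"] exI[of _ "\<lambda>_. Poly_Mapping.single 0 (x * u)"]) (use g0 in auto)
    ultimately show "y \<in> peval ?a ` ideal_gen (jac_minors m n)" by blast
  qed
  moreover have "n - (m - 1) = q" by (simp add: q_def m)
  ultimately show ?thesis using Dd by simp
qed


end
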